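(* Let $n\ge 2$, $m\ge 1$ and $j\ge 1$ be integers, and for $y>0$ let $D_{m+1}(y)$ be the determinant of the $(m+1)\times(m+1)$ Hankel matrix whose $(i,k)$ entry, for $0\le i,k\le m$, is $\psi_2^{(n+(i+k)j)}(y)$. Then $y\mapsto(-1)^{(n+1)(m+1)}D_{m+1}(y)$ is completely monotonic on $(0,\infty)$.
   Context: For an integer $n\ge 2$ and $x>0$, the poly-double gamma function is defined by $$\psi_2^{(n)}(x)=(-1)^{n+1}\,n!\sum_{k=0}^{\infty}\frac{1+k}{(x+k)^{n+1}} .$$ A real-valued $C^\infty$ function $f$ on $(0,\infty)$ is called completely monotonic if $(-1)^k f^{(k)}(x)\ge 0$ for all integers $k\ge 0$ and all $x>0$. *)

theory Defs
  imports "HOL-Analysis.Analysis" "HOL-Combinatorics.Permutations"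
begin

definition psi2 :: "nat \<Rightarrow> real \<Rightarrow> real" where
  "psi2 n x = (-1) ^ (n + 1) * fact n * (\<Sum>k. (1 + real k) / (x + real k) ^ (n + 1))"

definition det_nat :: "nat \<Rightarrow> (nat \<Rightarrow> nat \<Rightarrow> real) \<Rightarrow> real" where
  "det_nat N A = (\<Sum>p | p permutes {..<N}. of_int (sign p) * (\<Prod>i<N. A i (p i)))"

definition completely_monotonic :: "(real \<Rightarrow> real) \<Rightarrow> bool" where
  "completely_monotonic f \<longleftrightarrow>
     (\<forall>k. \<forall>x>0. (deriv ^^ k) f differentiable (at x)) \<and>
     (\<forall>k. \<forall>x>0. (-1) ^ k * (deriv ^^ k) f x \<ge> 0)"

end

theory Submission
  imports Defs "HOL-Probability.Distributions"
begin


lemma pos_functional: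
  fixes N :: nat and \<nu> :: "nat \<Rightarrow> real" and Mf :: "nat \<Rightarrow> real measure" and a :: "nat \<Rightarrow> real"
  assumes AEpos: "\<And>k. AE x in Mf k. 0 < x"
    and intg: "\<And>k p. integrable (Mf k) (\<lambda>x. x ^ p)"
    and sums: "\<And>p. (\<lambda>k. a k * integral\<^sup>L (Mf k) (\<lambda>x. x ^ p)) sums \<nu> p"
    and apos: "\<And>k. 0 \<le> a k"
    and fin: "finite S"
  shows "(\<forall>t. (\<forall>i<N. 0 < t i) \<longrightarrow> 0 \<le> (\<Sum>c\<in>S. w c * (\<Prod>i<N. t i ^ e c i)))
         \<Longrightarrow> 0 \<le> (\<Sum>c\<in>S. w c * (\<Prod>i<N. \<nu> (e c i)))"
proof (induction N arbitrary: w)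
  case 0
  then show ?case by auto
next
  case (Suc N)
  define R where "R c = (\<Prod>i<N. \<nu> (e c i))" for c
  define I where "I k p = integral\<^sup>L (Mf k) (\<lambda>x. x ^ p)" for k p
  have "(\<Sum>c\<in>S. w c * (\<Prod>i<Suc N. \<nu> (e c i))) = (\<Sum>c\<in>S. (\<Sum>k. w c * R c * (a k * I k (e c N))))"
  proof (rule sum.cong[OF refl])
    fix c assume "c \<in> S"
    have "(\<lambda>k. w c * R c * (a k * I k (e c N))) sums (w c * R c * \<nu> (e c N))"
      using sums[of "e c N"] unfolding I_def by (intro sums_mult)
    then show "w c * (\<Prod>i<Suc N. \<nu> (e c i)) = (\<Sum>k. w c * R c * (a k * I k (e c N)))"
      by (simp add: sums_iff R_def mult_ac)
  qed
  also have "\<dots> = (\<Sum>k. (\<Sum>c\<in>S. w c * R c * (a k * I k (e c N))))"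
  proof (rule suminf_sum[symmetric])
    fix c assume "c \<in> S"
    show "summable (\<lambda>k. w c * R c * (a k * I k (e c N)))"
      using sums[of "e c N"] unfolding I_def by (intro summable_mult sums_summable)
  qed
  finally have E: "(\<Sum>c\<in>S. w c * (\<Prod>i<Suc N. \<nu> (e c i))) = (\<Sum>k. (\<Sum>c\<in>S. w c * R c * (a k * I k (e c N))))" .
  have sm: "summable (\<lambda>k. (\<Sum>c\<in>S. w c * R c * (a k * I k (e c N))))"
    using sums unfolding I_def by (intro summable_sum summable_mult sums_summable) auto
  have "0 \<le> (\<Sum>k. (\<Sum>c\<in>S. w c * R c * (a k * I k (e c N))))"
  proof (rule suminf_nonneg[OF sm])
    fix k
    have eq: "(\<Sum>c\<in>S. w c * R c * (a k * I k (e c N))) =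
        a k * integral\<^sup>L (Mf k) (\<lambda>x. \<Sum>c\<in>S. (w c * x ^ e c N) * R c)"
    proof -
      have "integral\<^sup>L (Mf k) (\<lambda>x. \<Sum>c\<in>S. (w c * x ^ e c N) * R c)
          = (\<Sum>c\<in>S. integral\<^sup>L (Mf k) (\<lambda>x. (w c * R c) * x ^ e c N))"
      proof -
        have "(\<lambda>x. \<Sum>c\<in>S. (w c * x ^ e c N) * R c) = (\<lambda>x. \<Sum>c\<in>S. (w c * R c) * x ^ e c N)"
          by (simp add: mult_ac)
        moreover have "integral\<^sup>L (Mf k) (\<lambda>x. \<Sum>c\<in>S. (w c * R c) * x ^ e c N)
          = (\<Sum>c\<in>S. integral\<^sup>L (Mf k) (\<lambda>x. (w c * R c) * x ^ e c N))"
          using intg by (simp add: integral_sum)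
        ultimately show ?thesis by simp
      qed
      also have "\<dots> = (\<Sum>c\<in>S. (w c * R c) * I k (e c N))"
        unfolding I_def by (simp add: integral_mult_right_zero)
      finally show ?thesis by (simp add: sum_distrib_left mult_ac)
    qed
    have "0 \<le> integral\<^sup>L (Mf k) (\<lambda>x. \<Sum>c\<in>S. (w c * x ^ e c N) * R c)"
    proof (rule integral_nonneg_AE)
      show "AE x in Mf k. 0 \<le> (\<Sum>c\<in>S. (w c * x ^ e c N) * R c)"
        using AEpos[of k]
      proof eventually_elim
        case (elim x)
        have H: "\<forall>t. (\<forall>i<N. 0 < t i) \<longrightarrow> 0 \<le> (\<Sum>c\<in>S. (w c * x ^ e c N) * (\<Prod>i<N. t i ^ e c i))"
        proof (intro allI impI)
          fix t :: "nat \<Rightarrow> real" assume t: "\<forall>i<N. 0 < t i"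
          have tp: "\<forall>i<Suc N. 0 < (t(N := x)) i" using t elim by (auto simp: less_Suc_eq)
          have "0 \<le> (\<Sum>c\<in>S. w c * (\<Prod>i<Suc N. (t(N := x)) i ^ e c i))"
            using Suc.prems tp by blast
          also have "\<dots> = (\<Sum>c\<in>S. (w c * x ^ e c N) * (\<Prod>i<N. t i ^ e c i))"
          proof (intro sum.cong refl)
            fix c
            have "(\<Prod>i<N. (t(N := x)) i ^ e c i) = (\<Prod>i<N. t i ^ e c i)"
              by (intro prod.cong refl) auto
            then show "w c * (\<Prod>i<Suc N. (t(N := x)) i ^ e c i) = (w c * x ^ e c N) * (\<Prod>i<N. t i ^ e c i)"
              by (simp add: mult_ac)
          qed
          finally show "0 \<le> (\<Sum>c\<in>S. (w c * x ^ e c N) * (\<Prod>i<N. t i ^ e c i))" .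
        qed
        have "0 \<le> (\<Sum>c\<in>S. (w c * x ^ e c N) * (\<Prod>i<N. \<nu> (e c i)))"
          using Suc.IH[of "\<lambda>c. w c * x ^ e c N"] H by simp
        then show ?case by (simp add: R_def)
      qed
    qed
    then show "0 \<le> (\<Sum>c\<in>S. w c * R c * (a k * I k (e c N)))"
      unfolding eq using apos by simp
  qed
  then show ?case using E by simp
qed



definition mu :: "nat \<Rightarrow> real \<Rightarrow> nat \<Rightarrow> real" where
  "mu n y p = fact (n + p) * (\<Sum>k. (1 + real k) / (y + real k) ^ (n + p + 1))"

lemma summable_term:
  fixes d :: real and q :: nat
  assumes d: "0 < d" and q: "3 \<le> q"
  shows "summable (\<lambda>k. (1 + real k) / (d + real k) ^ q)"
proof (rule summable_comparison_test')
  show "summable (\<lambda>k. 2 * inverse (real k ^ (q - 1)))"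
    using q by (intro summable_mult inverse_power_summable) auto
  fix k :: nat assume k: "1 \<le> k"
  have kp: "0 < real k" using k by simp
  have "real k ^ q \<le> (d + real k) ^ q" using d by (intro power_mono) auto
  moreover have "0 < real k ^ q" using kp by simp
  moreover have "0 < (d + real k) ^ q" using d by simp
  ultimately have "(1 + real k) / (d + real k) ^ q \<le> (1 + real k) / real k ^ q"
    by (intro divide_left_mono) auto
  also have "\<dots> \<le> (2 * real k) / real k ^ q"
    using kp k by (intro divide_right_mono) auto
  also have "real k ^ q = real k * real k ^ (q - 1)"
    using q by (metis Suc_diff_le le_trans numeral_le_one_iff power_Suc semiring_norm(70) diff_Suc_1 one_le_numeral)
  also have "(2 * real k) / (real k * real k ^ (q - 1)) = 2 * inverse (real k ^ (q - 1))"
    using kp by (simp add: field_simps)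
  finally show "norm ((1 + real k) / (d + real k) ^ q) \<le> 2 * inverse (real k ^ (q - 1))"
    using d by simp
qed

lemma aux_deriv_val:
  fixes z c :: real assumes z: "z \<noteq> 0"
  shows "(0 * z ^ Suc r - c * (real (Suc r) * (1 * z ^ (Suc r - Suc 0)))) / (z ^ Suc r * z ^ Suc r)
     = - (real (Suc r) * (c / z ^ (Suc r + 1)))"
proof -
  have e: "z ^ Suc r * z ^ Suc r = z ^ r * z ^ (Suc r + 1)" by (simp add: power_add[symmetric])
  have "z ^ r \<noteq> 0" "z ^ (Suc r + 1) \<noteq> 0" using z by auto
  then show ?thesis unfolding e by (simp add: field_simps)
qed

lemma term_deriv:
  fixes x :: real
  assumes "0 < x" and q: "1 \<le> q"
  shows "((\<lambda>x. (1 + real k) / (x + real k) ^ q) has_real_derivative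
          - (real q * ((1 + real k) / (x + real k) ^ (q + 1)))) (at x)"
proof -
  have nz: "x + real k \<noteq> 0" using assms by simp
  have d1: "((\<lambda>x. x + real k) has_real_derivative 1) (at x)"
    by (auto intro!: derivative_eq_intros)
  have nz': "(x + real k) ^ q \<noteq> 0" using nz by simp
  obtain r where r: "q = Suc r" using q by (cases q) auto
  show ?thesis
    using DERIV_divide[OF DERIV_const[of "1 + real k"] DERIV_power[OF d1, of q] nz']
    by (rule DERIV_cong) (use aux_deriv_val[OF nz, of r "1 + real k"] in \<open>simp only: r\<close>)
qed

lemma mu_deriv:
  assumes y: "0 < y" and n: "2 \<le> n"
  shows "((\<lambda>y. mu n y p) has_real_derivative - mu n y (Suc p)) (at y)"
proof -
  define q where "q = n + p + 1"
  have q3: "3 \<le> q" using n by (simp add: q_def)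
  define f where "f k x = (1 + real k) / (x + real k) ^ q" for k :: nat and x :: real
  define f' where "f' k x = - (real q * ((1 + real k) / (x + real k) ^ (q + 1)))" for k :: nat and x :: real
  define S where "S = {y/2..}"
  have cS: "convex S" unfolding S_def by (rule convex_real_interval)
  have yS: "y \<in> S" and yi: "y \<in> interior S" using y by (auto simp: S_def)
  have der: "(f k has_field_derivative f' k x) (at x within S)" if "x \<in> S" for k x
  proof -
    have x0: "0 < x" using that y by (auto simp: S_def)
    have q1: "1 \<le> q" using q3 by simp
    show ?thesis unfolding f_def f'_def
      by (rule has_field_derivative_at_within[OF term_deriv[OF x0 q1]])
  qed
  have unif: "uniformly_convergent_on S (\<lambda>N x. \<Sum>k<N. f' k x)"
  proof (rule Weierstrass_m_test')
    fix k x assume x: "x \<in> S"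
    have x0: "y / 2 \<le> x" using x by (simp add: S_def)
    have "(y/2 + real k) ^ (q+1) \<le> (x + real k) ^ (q+1)" using x0 y by (intro power_mono) auto
    moreover have "0 < (y/2 + real k) ^ (q+1)" using y by simp
    ultimately have "(1 + real k) / (x + real k) ^ (q + 1) \<le> (1 + real k) / (y/2 + real k) ^ (q + 1)"
      by (intro divide_left_mono) auto
    moreover have "0 \<le> (1 + real k) / (x + real k) ^ (q + 1)" using x0 y by simp
    ultimately have le: "\<bar>(1 + real k) / (x + real k) ^ (q + 1)\<bar> \<le> (1 + real k) / (y/2 + real k) ^ (q + 1)"
      by linarith
    have "norm (f' k x) = real q * \<bar>(1 + real k) / (x + real k) ^ (q + 1)\<bar>"
      unfolding f'_def by (simp add: abs_mult)
    also have "\<dots> \<le> real q * ((1 + real k) / (y/2 + real k) ^ (q + 1))"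
      by (rule mult_left_mono[OF le]) simp
    finally show "norm (f' k x) \<le> real q * ((1 + real k) / (y/2 + real k) ^ (q + 1))" .
  next
    show "summable (\<lambda>k. real q * ((1 + real k) / (y/2 + real k) ^ (q + 1)))"
      using summable_term[of "y/2" "q+1"] y q3 by (intro summable_mult) auto
  qed
  have sy: "summable (\<lambda>k. f k y)" unfolding f_def using y q3 by (intro summable_term) auto
  have D: "((\<lambda>x. \<Sum>k. f k x) has_field_derivative (\<Sum>k. f' k y)) (at y)"
    by (rule has_field_derivative_series'(2)[OF cS der unif yS sy yi])
  have D2: "((\<lambda>x. fact (n + p) * (\<Sum>k. f k x)) has_field_derivative fact (n + p) * (\<Sum>k. f' k y)) (at y)"
    by (rule DERIV_cmult[OF D])
  have fun_eq: "(\<lambda>x. mu n x p) = (\<lambda>x. fact (n + p) * (\<Sum>k. f k x))"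
    by (simp add: mu_def f_def q_def)
  have s2: "summable (\<lambda>k. (1 + real k) / (y + real k) ^ (q + 1))"
    using y q3 by (intro summable_term) auto
  define T where "T k = (1 + real k) / (y + real k) ^ (q + 1)" for k
  have sT: "summable T" using s2 unfolding T_def .
  have "(\<Sum>k. f' k y) = (\<Sum>k. - (real q * T k))"
    unfolding f'_def T_def ..
  also have "\<dots> = - (\<Sum>k. real q * T k)"
    by (rule suminf_minus[OF summable_mult[OF sT]])
  also have "(\<Sum>k. real q * T k) = real q * (\<Sum>k. T k)"
    by (rule suminf_mult[OF sT])
  finally have sf: "(\<Sum>k. f' k y) = - (real q * (\<Sum>k. T k))" .
  have e1: "n + Suc p + 1 = q + 1" by (simp add: q_def)
  have e2: "(fact (n + Suc p) :: real) = real q * fact (n + p)"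
    by (simp add: q_def)
  have "fact (n + p) * (\<Sum>k. f' k y) = - (fact (n + Suc p) * (\<Sum>k. T k))"
    unfolding sf e2 by (simp only: mult_minus_right mult.assoc mult.left_commute)
  also have "\<dots> = - mu n y (Suc p)"
    unfolding mu_def T_def e1 ..
  finally show ?thesis using D2 fun_eq by simp
qed

lemma aux_moment_alg:
  fixes A B c z :: real assumes "A \<noteq> 0" "z \<noteq> 0"
  shows "(c * A / z ^ (n + 1)) * (B / (A * z ^ p)) = B * (c / z ^ (n + p + 1))"
  using assms by (simp add: field_simps power_add)

lemma mu_moments:
  assumes y: "0 < y" and n: "2 \<le> n"
  shows "(\<lambda>k. ((1 + real k) * fact n / (y + real k) ^ (n + 1)) *
            integral\<^sup>L (density lborel (erlang_density n (y + real k))) (\<lambda>x. x ^ p)) sums mu n y p"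
proof -
  have I: "integral\<^sup>L (density lborel (erlang_density n (y + real k))) (\<lambda>x. x ^ p)
        = fact (n + p) / (fact n * (y + real k) ^ p)" for k
  proof (rule has_bochner_integral_integral_eq, rule has_bochner_integral_nn_integral)
    have l: "0 < y + real k" using y by simp
    show "AE x in density lborel (erlang_density n (y + real k)). 0 \<le> x ^ p"
      by (subst AE_density) (auto simp: erlang_density_def)
    show "(\<integral>\<^sup>+ x. ennreal (x ^ p) \<partial>density lborel (erlang_density n (y + real k)))
        = ennreal (fact (n + p) / (fact n * (y + real k) ^ p))"
    proof -
      have l': "0 \<le> y + real k" using l by simp
      have "(\<lambda>x. ennreal (erlang_density n (y + real k) x) * ennreal (x ^ p))
          = (\<lambda>x. ennreal (erlang_density n (y + real k) x * x ^ p))"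
        using l' by (simp add: ennreal_mult')
      then show ?thesis
        using nn_integral_erlang_ith_moment[OF l, of n p]
        by (subst nn_integral_density) auto
    qed
  qed (use y in auto)
  have s: "summable (\<lambda>k. (1 + real k) / (y + real k) ^ (n + p + 1))"
    using y n by (intro summable_term) auto
  have "(\<lambda>k. fact (n + p) * ((1 + real k) / (y + real k) ^ (n + p + 1))) sums mu n y p"
    unfolding mu_def by (intro sums_mult summable_sums s)
  moreover have "((1 + real k) * fact n / (y + real k) ^ (n + 1)) *
            integral\<^sup>L (density lborel (erlang_density n (y + real k))) (\<lambda>x. x ^ p)
        = fact (n + p) * ((1 + real k) / (y + real k) ^ (n + p + 1))" for k
  proof -
    have "0 < y + real k" using y by simp
    then show ?thesis unfolding I by (intro aux_moment_alg) auto
  qed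
  ultimately show ?thesis by simp
qed



definition Lists :: "nat \<Rightarrow> nat \<Rightarrow> nat list set" where
  "Lists K N = {ls. set ls \<subseteq> {..<N} \<and> length ls = K}"

lemma finite_Lists: "finite (Lists K N)"
  unfolding Lists_def by (rule finite_lists_length_eq) simp

lemma sum_Lists_Suc:
  "(\<Sum>ls\<in>Lists (Suc K) N. F ls) = (\<Sum>ls\<in>Lists K N. \<Sum>l<N. F (l # ls))"
proof -
  have "(\<Sum>ls\<in>Lists (Suc K) N. F ls) = (\<Sum>ls\<in>(\<lambda>(xs, n). n # xs) ` (Lists K N \<times> {..<N}). F ls)"
    unfolding Lists_def by (simp only: lists_length_Suc_eq)
  also have "\<dots> = (\<Sum>(xs, n)\<in>Lists K N \<times> {..<N}. F (n # xs))"
    by (subst sum.reindex) (auto simp: inj_on_def case_prod_unfold)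
  also have "\<dots> = (\<Sum>ls\<in>Lists K N. \<Sum>l<N. F (l # ls))"
    by (simp add: sum.cartesian_product)
  finally show ?thesis .
qed

lemma prod_count_Cons:
  fixes t :: "nat \<Rightarrow> real"
  assumes "l < N"
  shows "(\<Prod>i<N. t i ^ count_list (l # ls) i) = t l * (\<Prod>i<N. t i ^ count_list ls i)"
proof -
  have "(\<Prod>i<N. t i ^ count_list (l # ls) i) = (\<Prod>i<N. (if i = l then t i else 1) * t i ^ count_list ls i)"
    by (intro prod.cong refl) auto
  also have "\<dots> = (\<Prod>i<N. (if i = l then t i else 1)) * (\<Prod>i<N. t i ^ count_list ls i)"
    by (rule prod.distrib)
  also have "(\<Prod>i<N. (if i = l then t i else 1)) = t l"
    using assms by (simp add: prod.delta)
  finally show ?thesis .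
qed

lemma sum_Lists_poly:
  fixes t :: "nat \<Rightarrow> real"
  shows "(\<Sum>ls\<in>Lists K N. \<Prod>i<N. t i ^ count_list ls i) = (\<Sum>i<N. t i) ^ K"
proof (induction K)
  case 0
  have "Lists 0 N = {[]}" by (auto simp: Lists_def)
  then show ?case by simp
next
  case (Suc K)
  have "(\<Sum>ls\<in>Lists (Suc K) N. \<Prod>i<N. t i ^ count_list ls i)
      = (\<Sum>ls\<in>Lists K N. \<Sum>l<N. t l * (\<Prod>i<N. t i ^ count_list ls i))"
    unfolding sum_Lists_Suc by (intro sum.cong refl prod_count_Cons) auto
  also have "\<dots> = (\<Sum>ls\<in>Lists K N. (\<Sum>l<N. t l) * (\<Prod>i<N. t i ^ count_list ls i))"
    by (simp add: sum_distrib_right)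
  also have "\<dots> = (\<Sum>l<N. t l) * (\<Sum>i<N. t i) ^ K"
    by (simp add: sum_distrib_left[symmetric] Suc.IH)
  finally show ?case by simp
qed

lemma prod_deriv:
  fixes g :: "nat \<Rightarrow> real \<Rightarrow> real" and N :: nat and a :: "nat \<Rightarrow> nat"
  assumes gd: "\<And>p. ((\<lambda>y. g p y) has_real_derivative - g (Suc p) y) (at y)"
  shows "((\<lambda>y. \<Prod>i<N. g (a i) y) has_real_derivative
           - (\<Sum>l<N. \<Prod>i<N. g (a i + (if i = l then 1 else 0)) y)) (at y)"
proof -
  have D: "((\<lambda>y. \<Prod>i<N. g (a i) y) has_real_derivative
           (\<Sum>l\<in>{..<N}. (- g (Suc (a l)) y) * (\<Prod>i\<in>{..<N}-{l}. g (a i) y))) (at y)"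
    by (rule has_field_derivative_prod) (rule gd)
  have "(\<Prod>i<N. g (a i + (if i = l then 1 else 0)) y) = g (Suc (a l)) y * (\<Prod>i\<in>{..<N}-{l}. g (a i) y)"
    if l: "l < N" for l
  proof -
    have lN: "l \<in> {..<N}" using l by simp
    have "(\<Prod>i<N. g (a i + (if i = l then 1 else 0)) y)
        = g (a l + 1) y * (\<Prod>i\<in>{..<N}-{l}. g (a i + (if i = l then 1 else 0)) y)"
      using prod.remove[of "{..<N}" l "\<lambda>i. g (a i + (if i = l then 1 else 0)) y"] lN by simp
    also have "(\<Prod>i\<in>{..<N}-{l}. g (a i + (if i = l then 1 else 0)) y) = (\<Prod>i\<in>{..<N}-{l}. g (a i) y)"
      by (intro prod.cong refl) auto
    finally show ?thesis by simp
  qed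
  then have "(\<Sum>l\<in>{..<N}. (- g (Suc (a l)) y) * (\<Prod>i\<in>{..<N}-{l}. g (a i) y))
      = - (\<Sum>l<N. \<Prod>i<N. g (a i + (if i = l then 1 else 0)) y)"
    by (simp add: sum_negf[symmetric])
  with D show ?thesis by simp
qed

definition TT :: "(nat \<Rightarrow> real \<Rightarrow> real) \<Rightarrow> nat \<Rightarrow> 'c set \<Rightarrow> ('c \<Rightarrow> real) \<Rightarrow> ('c \<Rightarrow> nat \<Rightarrow> nat) \<Rightarrow> nat \<Rightarrow> real \<Rightarrow> real" where
  "TT g N S w e K y = (-1) ^ K * (\<Sum>c\<in>S. w c * (\<Sum>ls\<in>Lists K N. \<Prod>i<N. g (e c i + count_list ls i) y))"

lemma TT_deriv:
  fixes g :: "nat \<Rightarrow> real \<Rightarrow> real" and N :: nat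
  assumes gd: "\<And>p. ((\<lambda>y. g p y) has_real_derivative - g (Suc p) y) (at y)"
  shows "((\<lambda>y. TT g N S w e K y) has_real_derivative TT g N S w e (Suc K) y) (at y)"
proof -
  define F where "F c ls = (\<Prod>i<N. g (e c i + count_list ls i) y)" for c ls
  have inner: "((\<lambda>y. \<Prod>i<N. g (e c i + count_list ls i) y) has_real_derivative
        - (\<Sum>l<N. F c (l # ls))) (at y)" for c ls
  proof -
    have "(\<Sum>l<N. \<Prod>i<N. g (e c i + count_list ls i + (if i = l then 1 else 0)) y) = (\<Sum>l<N. F c (l # ls))"
      unfolding F_def by (intro sum.cong prod.cong refl) auto
    then show ?thesis
      using prod_deriv[where g=g and a="\<lambda>i. e c i + count_list ls i" and N=N, OF gd] by simp
  qed
  have D: "((\<lambda>y. (-1) ^ K * (\<Sum>c\<in>S. w c * (\<Sum>ls\<in>Lists K N. \<Prod>i<N. g (e c i + count_list ls i) y)))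
      has_real_derivative (-1) ^ K * (\<Sum>c\<in>S. w c * (\<Sum>ls\<in>Lists K N. - (\<Sum>l<N. F c (l # ls))))) (at y)"
    by (intro DERIV_cmult DERIV_sum inner)
  have "(-1) ^ K * (\<Sum>c\<in>S. w c * (\<Sum>ls\<in>Lists K N. - (\<Sum>l<N. F c (l # ls))))
      = (-1) ^ Suc K * (\<Sum>c\<in>S. w c * (\<Sum>ls\<in>Lists (Suc K) N. F c ls))"
    by (simp add: sum_Lists_Suc sum_negf)
  then show ?thesis using D unfolding TT_def F_def by simp
qed

lemma iter_deriv:
  fixes F :: "nat \<Rightarrow> real \<Rightarrow> real"
  assumes d: "\<And>K y. 0 < y \<Longrightarrow> (F K has_real_derivative F (Suc K) y) (at y)"
  shows "\<forall>y>0. (deriv ^^ K) (F 0) y = F K y \<and> (deriv ^^ K) (F 0) differentiable (at y)"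
proof (induction K)
  case 0
  show ?case
  proof (intro allI impI conjI)
    fix y :: real assume y: "0 < y"
    show "(deriv ^^ 0) (F 0) y = F 0 y" by simp
    show "(deriv ^^ 0) (F 0) differentiable (at y)"
      using d[OF y, of 0] by (auto simp: real_differentiable_def)
  qed
next
  case (Suc K)
  show ?case
  proof (intro allI impI conjI)
    fix y :: real assume y: "0 < y"
    have ev: "eventually (\<lambda>x. (deriv ^^ K) (F 0) x = F K x) (nhds y)"
    proof -
      have "eventually (\<lambda>x. x \<in> {0<..}) (nhds y)"
        by (rule eventually_nhds_in_open) (use y in auto)
      then show ?thesis by eventually_elim (use Suc.IH in auto)
    qed
    have DD: "((deriv ^^ K) (F 0) has_real_derivative F (Suc K) y) (at y)"
      using d[OF y, of K] DERIV_cong_ev[OF refl ev refl] by simp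
    show "(deriv ^^ Suc K) (F 0) y = F (Suc K) y"
      using DERIV_imp_deriv[OF DD] by simp
    have "(deriv ^^ Suc K) (F 0) = deriv ((deriv ^^ K) (F 0))" by simp
    moreover have ev2: "eventually (\<lambda>x. deriv ((deriv ^^ K) (F 0)) x = F (Suc K) x) (nhds y)"
    proof -
      have "eventually (\<lambda>x. x \<in> {0<..}) (nhds y)"
        by (rule eventually_nhds_in_open) (use y in auto)
      then show ?thesis
      proof eventually_elim
        case (elim x)
        then have x: "0 < x" by simp
        have ev': "eventually (\<lambda>z. (deriv ^^ K) (F 0) z = F K z) (nhds x)"
        proof -
          have "eventually (\<lambda>z. z \<in> {0<..}) (nhds x)"
            by (rule eventually_nhds_in_open) (use x in auto)
          then show ?thesis by eventually_elim (use Suc.IH in auto)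
        qed
        have "((deriv ^^ K) (F 0) has_real_derivative F (Suc K) x) (at x)"
          using d[OF x, of K] DERIV_cong_ev[OF refl ev' refl] by simp
        then show ?case by (rule DERIV_imp_deriv)
      qed
    qed
    have "((deriv ^^ Suc K) (F 0) has_real_derivative F (Suc (Suc K)) y) (at y)"
      using d[OF y, of "Suc K"] DERIV_cong_ev[OF refl ev2 refl] by simp
    then show "(deriv ^^ Suc K) (F 0) differentiable (at y)"
      by (auto simp: real_differentiable_def)
  qed
qed



lemma sign_rewrite:
  fixes h :: "nat \<Rightarrow> real" and N n j :: nat
  shows "(-1) ^ ((n + 1) * N) * det_nat N (\<lambda>i k. (-1) ^ (n + (i + k) * j + 1) * h ((i + k) * j))
       = (\<Sum>\<sigma> | \<sigma> permutes {..<N}. of_int (sign \<sigma>) * (\<Prod>i<N. h ((i + \<sigma> i) * j)))"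
proof -
  have tm: "(\<Prod>i<N. (-1) ^ (n + (i + \<sigma> i) * j + 1) * h ((i + \<sigma> i) * j))
      = (-1) ^ ((n + 1) * N) * (\<Prod>i<N. h ((i + \<sigma> i) * j))" if \<sigma>: "\<sigma> permutes {..<N}" for \<sigma>
  proof -
    have ss: "(\<Sum>i<N. \<sigma> i) = (\<Sum>i<N. i)"
      using sum.permute[OF \<sigma>, of id] by (simp add: comp_def)
    have "(\<Sum>i<N. n + (i + \<sigma> i) * j + 1) = (\<Sum>i<N. (n + 1) + (i * j + \<sigma> i * j))"
      by (intro sum.cong refl) (simp add: algebra_simps)
    also have "\<dots> = (\<Sum>i<N. n + 1) + ((\<Sum>i<N. i * j) + (\<Sum>i<N. \<sigma> i * j))"
      by (simp only: sum.distrib)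
    also have "\<dots> = (n + 1) * N + ((\<Sum>i<N. i) * j + (\<Sum>i<N. \<sigma> i) * j)"
      by (simp only: sum_distrib_right[symmetric]) simp
    also have "\<dots> = (n + 1) * N + 2 * ((\<Sum>i<N. i) * j)"
      using ss by simp
    finally have se: "(\<Sum>i<N. n + (i + \<sigma> i) * j + 1) = (n + 1) * N + 2 * ((\<Sum>i<N. i) * j)" .
    have "(\<Prod>i<N. (-1::real) ^ (n + (i + \<sigma> i) * j + 1)) = (-1) ^ (\<Sum>i<N. n + (i + \<sigma> i) * j + 1)"
      by (simp add: power_sum)
    also have "\<dots> = (-1) ^ ((n + 1) * N)"
      unfolding se by (simp add: power_add power_mult)
    finally have pe: "(\<Prod>i<N. (-1::real) ^ (n + (i + \<sigma> i) * j + 1)) = (-1) ^ ((n + 1) * N)" .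
    show ?thesis by (subst prod.distrib) (simp only: pe)
  qed
  have sq: "(-1::real) ^ ((n + 1) * N) * (-1) ^ ((n + 1) * N) = 1"
    by (simp add: power_add[symmetric] power_mult_distrib[symmetric] mult_2[symmetric] power_mult)
  show ?thesis
    unfolding det_nat_def sum_distrib_left
  proof (intro sum.cong refl)
    fix \<sigma> assume "\<sigma> \<in> {\<sigma>. \<sigma> permutes {..<N}}"
    then have \<sigma>: "\<sigma> permutes {..<N}" by simp
    show "(-1) ^ ((n + 1) * N) * (of_int (sign \<sigma>) * (\<Prod>i<N. (-1) ^ (n + (i + \<sigma> i) * j + 1) * h ((i + \<sigma> i) * j)))
        = of_int (sign \<sigma>) * (\<Prod>i<N. h ((i + \<sigma> i) * j))"
      unfolding tm[OF \<sigma>] using sq by (simp add: mult_ac)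
  qed
qed

lemma symmetrize:
  fixes h :: "nat \<Rightarrow> real" and N j :: nat
  defines "P \<equiv> {p. p permutes {..<N}}"
  shows "(\<Sum>\<sigma>\<in>P. of_int (sign \<sigma>) * (\<Prod>i<N. h ((i + \<sigma> i) * j)))
       = (\<Sum>ab\<in>P \<times> P. (of_int (sign (fst ab)) * of_int (sign (snd ab)) / fact N) *
              (\<Prod>i<N. h ((fst ab i + snd ab i) * j)))"
proof -
  define D where "D = (\<Sum>\<sigma>\<in>P. of_int (sign \<sigma>) * (\<Prod>i<N. h ((i + \<sigma> i) * j)))"
  have inner: "(\<Sum>\<beta>\<in>P. of_int (sign \<alpha>) * of_int (sign \<beta>) * (\<Prod>i<N. h ((\<alpha> i + \<beta> i) * j))) = D"
    if \<alpha>: "\<alpha> \<in> P" for \<alpha>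
  proof -
    have \<alpha>p: "\<alpha> permutes {..<N}" using \<alpha> by (simp add: P_def)
    have ia: "inv \<alpha> permutes {..<N}" by (rule permutes_inv[OF \<alpha>p])
    have D2: "D = (\<Sum>\<beta>\<in>P. of_int (sign (\<beta> \<circ> inv \<alpha>)) * (\<Prod>i<N. h ((i + (\<beta> \<circ> inv \<alpha>) i) * j)))"
      unfolding D_def P_def by (rule sum_permutations_compose_right[OF ia])
    show ?thesis unfolding D2
    proof (intro sum.cong refl)
      fix \<beta> assume "\<beta> \<in> P"
      then have \<beta>: "\<beta> permutes {..<N}" by (simp add: P_def)
      have sg: "sign (\<beta> \<circ> inv \<alpha>) = sign \<beta> * sign \<alpha>"
        using sign_compose[OF permutes_imp_permutation[OF _ \<beta>] permutes_imp_permutation[OF _ ia]]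
          sign_inverse[OF permutes_imp_permutation[OF _ \<alpha>p]] by simp
      have pr: "(\<Prod>i<N. h ((\<alpha> i + \<beta> i) * j)) = (\<Prod>i<N. h ((i + (\<beta> \<circ> inv \<alpha>) i) * j))"
        using prod.permute[OF ia, of "\<lambda>i. h ((\<alpha> i + \<beta> i) * j)"]
        by (simp add: comp_def permutes_inverses(1)[OF \<alpha>p])
      show "of_int (sign \<alpha>) * of_int (sign \<beta>) * (\<Prod>i<N. h ((\<alpha> i + \<beta> i) * j))
          = of_int (sign (\<beta> \<circ> inv \<alpha>)) * (\<Prod>i<N. h ((i + (\<beta> \<circ> inv \<alpha>) i) * j))"
        unfolding sg pr by (simp add: mult_ac)
    qed
  qed
  have cP: "card P = fact N" unfolding P_def by (rule card_permutations) auto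
  have "(\<Sum>ab\<in>P \<times> P. (of_int (sign (fst ab)) * of_int (sign (snd ab)) / fact N) *
              (\<Prod>i<N. h ((fst ab i + snd ab i) * j)))
      = (\<Sum>\<alpha>\<in>P. \<Sum>\<beta>\<in>P. (of_int (sign \<alpha>) * of_int (sign \<beta>) * (\<Prod>i<N. h ((\<alpha> i + \<beta> i) * j))) / fact N)"
    unfolding sum.cartesian_product by (rule sum.cong) (auto simp: case_prod_unfold)
  also have "\<dots> = (\<Sum>\<alpha>\<in>P. D / fact N)"
    by (intro sum.cong refl) (simp add: sum_divide_distrib[symmetric] inner)
  also have "\<dots> = D" using cP by simp
  finally show ?thesis by (simp add: D_def)
qed

lemma erl_moment:
  assumes l: "0 < l"
  shows "has_bochner_integral (density lborel (erlang_density n l)) (\<lambda>x. x ^ p) (fact (n + p) / (fact n * l ^ p))"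
proof (rule has_bochner_integral_nn_integral)
  show "AE x in density lborel (erlang_density n l). 0 \<le> x ^ p"
    by (subst AE_density) (auto simp: erlang_density_def)
  have l': "0 \<le> l" using l by simp
  have "(\<lambda>x. ennreal (erlang_density n l x) * ennreal (x ^ p))
      = (\<lambda>x. ennreal (erlang_density n l x * x ^ p))"
    using l' by (simp add: ennreal_mult')
  then show "(\<integral>\<^sup>+ x. ennreal (x ^ p) \<partial>density lborel (erlang_density n l))
      = ennreal (fact (n + p) / (fact n * l ^ p))"
    using nn_integral_erlang_ith_moment[OF l, of n p]
    by (subst nn_integral_density) auto
qed (use l in auto)

lemma psi2_mu: "psi2 (n + p) y = (-1) ^ (n + p + 1) * mu n y p"
  by (simp add: psi2_def mu_def mult.assoc)

lemma PE_square:
  fixes t :: "nat \<Rightarrow> real" and N j :: nat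
  defines "P \<equiv> {p. p permutes {..<N}}"
  shows "(\<Sum>ab\<in>P \<times> P. (of_int (sign (fst ab)) * of_int (sign (snd ab)) / fact N) *
              (\<Prod>i<N. t i ^ ((fst ab i + snd ab i) * j)))
       = (\<Sum>\<alpha>\<in>P. of_int (sign \<alpha>) * (\<Prod>i<N. t i ^ (\<alpha> i * j)))\<^sup>2 / fact N"
proof -
  have "(\<Sum>\<alpha>\<in>P. of_int (sign \<alpha>) * (\<Prod>i<N. t i ^ (\<alpha> i * j)))\<^sup>2
      = (\<Sum>\<alpha>\<in>P. \<Sum>\<beta>\<in>P. (of_int (sign \<alpha>) * (\<Prod>i<N. t i ^ (\<alpha> i * j))) * (of_int (sign \<beta>) * (\<Prod>i<N. t i ^ (\<beta> i * j))))"
    by (simp add: power2_eq_square sum_product)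
  also have "\<dots> = (\<Sum>ab\<in>P \<times> P. (of_int (sign (fst ab)) * of_int (sign (snd ab))) *
              (\<Prod>i<N. t i ^ ((fst ab i + snd ab i) * j)))"
    unfolding sum.cartesian_product
  proof (rule sum.cong[OF refl])
    fix ab :: "(nat \<Rightarrow> nat) \<times> (nat \<Rightarrow> nat)"
    have "(\<Prod>i<N. t i ^ ((fst ab i + snd ab i) * j)) = (\<Prod>i<N. t i ^ (fst ab i * j)) * (\<Prod>i<N. t i ^ (snd ab i * j))"
      by (simp add: add_mult_distrib power_add prod.distrib)
    then show "(case ab of (\<alpha>, \<beta>) \<Rightarrow> (of_int (sign \<alpha>) * (\<Prod>i<N. t i ^ (\<alpha> i * j))) * (of_int (sign \<beta>) * (\<Prod>i<N. t i ^ (\<beta> i * j))))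
        = (of_int (sign (fst ab)) * of_int (sign (snd ab))) * (\<Prod>i<N. t i ^ ((fst ab i + snd ab i) * j))"
      by (simp add: case_prod_unfold mult_ac)
  qed
  finally have sq: "(\<Sum>\<alpha>\<in>P. of_int (sign \<alpha>) * (\<Prod>i<N. t i ^ (\<alpha> i * j)))\<^sup>2
      = (\<Sum>ab\<in>P \<times> P. (of_int (sign (fst ab)) * of_int (sign (snd ab))) *
              (\<Prod>i<N. t i ^ ((fst ab i + snd ab i) * j)))" .
  show ?thesis unfolding sq sum_divide_distrib by (rule sum.cong[OF refl]) simp
qed


theorem proposition4p1:
  fixes n m j :: nat
  assumes "n \<ge> 2" and "m \<ge> 1" and "j \<ge> 1"
  shows "completely_monotonic
           (\<lambda>y. (-1) ^ ((n + 1) * (m + 1)) *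
                 det_nat (m + 1) (\<lambda>i k. psi2 (n + (i + k) * j) y))"
proof -
  have n2: "2 \<le> n" using assms(1) .
  define N where "N = m + 1"
  define P where "P = {p. p permutes {..<N}}"
  define S where "S = P \<times> P"
  define w where "w ab = of_int (sign (fst ab)) * of_int (sign (snd ab)) / (fact N :: real)" for ab :: "(nat \<Rightarrow> nat) \<times> (nat \<Rightarrow> nat)"
  define e where "e ab i = (fst ab i + snd ab i) * j" for ab :: "(nat \<Rightarrow> nat) \<times> (nat \<Rightarrow> nat)" and i
  define g where "g p y = mu n y p" for p y
  define F where "F K y = TT g N S w e K y" for K y
  have finP: "finite P" unfolding P_def by (rule finite_permutations) simp
  have finS: "finite S" unfolding S_def using finP by simp
  have f_eq: "(\<lambda>y. (-1) ^ ((n + 1) * (m + 1)) * det_nat (m + 1) (\<lambda>i k. psi2 (n + (i + k) * j) y)) = F 0"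
  proof
    fix y :: real
    have L0: "Lists 0 N = {[]}" by (auto simp: Lists_def)
    have "(-1) ^ ((n + 1) * (m + 1)) * det_nat (m + 1) (\<lambda>i k. psi2 (n + (i + k) * j) y)
        = (-1) ^ ((n + 1) * N) * det_nat N (\<lambda>i k. (-1) ^ (n + (i + k) * j + 1) * mu n y ((i + k) * j))"
      by (simp add: N_def psi2_mu)
    also have "\<dots> = (\<Sum>\<sigma> | \<sigma> permutes {..<N}. of_int (sign \<sigma>) * (\<Prod>i<N. mu n y ((i + \<sigma> i) * j)))"
      by (rule sign_rewrite)
    also have "\<dots> = (\<Sum>ab\<in>P \<times> P. (of_int (sign (fst ab)) * of_int (sign (snd ab)) / fact N) *
              (\<Prod>i<N. mu n y ((fst ab i + snd ab i) * j)))"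
      unfolding P_def by (rule symmetrize)
    also have "\<dots> = F 0 y"
      by (simp add: F_def TT_def L0 S_def w_def e_def g_def)
    finally show "(-1) ^ ((n + 1) * (m + 1)) * det_nat (m + 1) (\<lambda>i k. psi2 (n + (i + k) * j) y) = F 0 y" .
  qed
  have dF: "(F K has_real_derivative F (Suc K) y) (at y)" if y: "0 < y" for K y
  proof -
    have gd: "((\<lambda>y. g p y) has_real_derivative - g (Suc p) y) (at y)" for p
      unfolding g_def by (rule mu_deriv[OF y n2])
    show ?thesis
      using TT_deriv[where g=g and N=N and S=S and w=w and e=e and K=K, OF gd]
      by (simp add: F_def[abs_def])
  qed
  note it = iter_deriv[of F, OF dF]
  have pos: "0 \<le> (-1) ^ K * F K y" if y: "0 < y" for K y
  proof -
    define Mf where "Mf k = density lborel (erlang_density n (y + real k))" for k :: nat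
    define a where "a k = (1 + real k) * fact n / (y + real k) ^ (n + 1)" for k :: nat
    define E where "E cl i = e (fst cl) i + count_list (snd cl) i" for cl :: "((nat \<Rightarrow> nat) \<times> (nat \<Rightarrow> nat)) \<times> nat list" and i
    have AEpos: "AE x in Mf k. 0 < x" for k
    proof -
      have "\<forall>x. 0 < erlang_density n (y + real k) x \<longrightarrow> 0 < x"
      proof (intro allI impI)
        fix x :: real assume h: "0 < erlang_density n (y + real k) x"
        show "0 < x"
        proof (rule ccontr)
          assume "\<not> 0 < x"
          then have "x < 0 \<or> x = 0" by auto
          then show False using h n2 by (auto simp: erlang_density_def power_0_left)
        qed
      qed
      then show ?thesis unfolding Mf_def by (subst AE_density) auto
    qed
    have intg: "integrable (Mf k) (\<lambda>x. x ^ p)" for k p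
    proof -
      have "0 < y + real k" using y by simp
      then show ?thesis unfolding Mf_def by (rule integrable.intros[OF erl_moment])
    qed
    have sums: "(\<lambda>k. a k * integral\<^sup>L (Mf k) (\<lambda>x. x ^ p)) sums mu n y p" for p
      unfolding a_def Mf_def by (rule mu_moments[OF y n2])
    have apos: "0 \<le> a k" for k unfolding a_def using y by simp
    have finSL: "finite (S \<times> Lists K N)" using finS finite_Lists by simp
    have poly: "\<forall>t. (\<forall>i<N. 0 < t i) \<longrightarrow> 0 \<le> (\<Sum>cl\<in>S \<times> Lists K N. w (fst cl) * (\<Prod>i<N. t i ^ E cl i))"
    proof (intro allI impI)
      fix t :: "nat \<Rightarrow> real" assume t: "\<forall>i<N. 0 < t i"
      have "(\<Sum>cl\<in>S \<times> Lists K N. w (fst cl) * (\<Prod>i<N. t i ^ E cl i))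
          = (\<Sum>c\<in>S. \<Sum>ls\<in>Lists K N. (w c * (\<Prod>i<N. t i ^ e c i)) * (\<Prod>i<N. t i ^ count_list ls i))"
        unfolding sum.cartesian_product
      proof (rule sum.cong[OF refl])
        fix cl :: "((nat \<Rightarrow> nat) \<times> (nat \<Rightarrow> nat)) \<times> nat list"
        have "(\<Prod>i<N. t i ^ E cl i) = (\<Prod>i<N. t i ^ e (fst cl) i) * (\<Prod>i<N. t i ^ count_list (snd cl) i)"
          unfolding E_def by (simp add: power_add prod.distrib)
        then show "w (fst cl) * (\<Prod>i<N. t i ^ E cl i) = (case cl of (c, ls) \<Rightarrow> (w c * (\<Prod>i<N. t i ^ e c i)) * (\<Prod>i<N. t i ^ count_list ls i))"
          by (simp add: case_prod_unfold mult.assoc)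
      qed
      also have "\<dots> = (\<Sum>c\<in>S. (w c * (\<Prod>i<N. t i ^ e c i)) * (\<Sum>i<N. t i) ^ K)"
      proof (rule sum.cong[OF refl])
        fix c
        show "(\<Sum>ls\<in>Lists K N. (w c * (\<Prod>i<N. t i ^ e c i)) * (\<Prod>i<N. t i ^ count_list ls i))
            = (w c * (\<Prod>i<N. t i ^ e c i)) * (\<Sum>i<N. t i) ^ K"
          by (simp only: sum_distrib_left[symmetric] sum_Lists_poly)
      qed
      also have "\<dots> = (\<Sum>c\<in>S. w c * (\<Prod>i<N. t i ^ e c i)) * (\<Sum>i<N. t i) ^ K"
        by (simp only: sum_distrib_right)
      also have "(\<Sum>c\<in>S. w c * (\<Prod>i<N. t i ^ e c i))
          = (\<Sum>\<alpha>\<in>P. of_int (sign \<alpha>) * (\<Prod>i<N. t i ^ (\<alpha> i * j)))\<^sup>2 / fact N"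
        unfolding S_def w_def e_def P_def by (rule PE_square)
      finally have eq: "(\<Sum>cl\<in>S \<times> Lists K N. w (fst cl) * (\<Prod>i<N. t i ^ E cl i))
          = (\<Sum>\<alpha>\<in>P. of_int (sign \<alpha>) * (\<Prod>i<N. t i ^ (\<alpha> i * j)))\<^sup>2 / fact N * (\<Sum>i<N. t i) ^ K" .
      have st: "0 \<le> (\<Sum>i<N. t i)" using t by (intro sum_nonneg) (auto intro: less_imp_le)
      show "0 \<le> (\<Sum>cl\<in>S \<times> Lists K N. w (fst cl) * (\<Prod>i<N. t i ^ E cl i))"
        unfolding eq by (intro mult_nonneg_nonneg divide_nonneg_nonneg zero_le_power[OF st]) simp_all
    qed
    have "0 \<le> (\<Sum>cl\<in>S \<times> Lists K N. w (fst cl) * (\<Prod>i<N. mu n y (E cl i)))"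
      by (rule pos_functional[OF AEpos intg sums apos finSL poly])
    also have "\<dots> = (-1) ^ K * F K y"
    proof -
      have "(\<Sum>cl\<in>S \<times> Lists K N. w (fst cl) * (\<Prod>i<N. mu n y (E cl i)))
          = (\<Sum>c\<in>S. w c * (\<Sum>ls\<in>Lists K N. \<Prod>i<N. g (e c i + count_list ls i) y))"
        unfolding sum.cartesian_product sum_distrib_left
        by (rule sum.cong) (auto simp: E_def g_def case_prod_unfold)
      moreover have "(-1::real) ^ K * (-1) ^ K = 1"
        by (simp add: power_add[symmetric] mult_2[symmetric] power_mult)
      ultimately show ?thesis
        unfolding F_def TT_def by (simp only: mult.assoc[symmetric])
    qed
    finally show ?thesis .
  qed
  show ?thesis
    unfolding completely_monotonic_def f_eq
  proof (intro conjI allI impI)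
    fix K :: nat and x :: real assume x: "0 < x"
    show "(deriv ^^ K) (F 0) differentiable (at x)" using it x by blast
    show "0 \<le> (-1) ^ K * (deriv ^^ K) (F 0) x" using it x pos[OF x, of K] by simp
  qed
qed


end
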